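(* For $i=1,\dots,q$ let $\lambda_i$ be a partition of $k_i$ and let $G_i$ be an $S_{\lambda_i}$-$k_i$-colourable graph. Let $\lambda=\bigcup_{i=1}^q\lambda_i$ be the multiset union and $k=k_1+\dots+k_q$. Then the join $\vee_{i=1}^qG_i$ is $S_\lambda$-$k$-colourable.
   Context: View a graph $G$ as a symmetric digraph: each edge $uv$ gives arcs $e=(u,v)$ and $e^{-1}=(v,u)$. For an inverse-closed set $S$ of permutations, an $S$-signature of $G$ is a map $\sigma$ from arcs to $S$ with $\sigma(e^{-1})=\sigma(e)^{-1}$. A $k$-colouring of $(G,\sigma)$ is a map $f:V(G)\to[k]$ with $\sigma(e)(f(x))\ne f(y)$ for every arc $e=(x,y)$; $G$ is $S$-$k$-colourable if $(G,\sigma)$ is $k$-colourable for every $S$-signature $\sigma$. For a partition $\lambda=\{k_1,\dots,k_q\}$ of $k$ (listed in a fixed order), let $s_0=0$, $s_j=s_{j-1}+k_j$, $I_j=\{s_{j-1}+1,\dots,s_j\}$, and let $S_\lambda$ be the set of permutations $\pi$ of $[k]$ with $\pi(I_j)=I_j$ for all $j$. The join $\vee_{i=1}^qG_i$ is the disjoint union of the $G_i$ plus all edges between $V(G_i)$ and $V(G_j)$ for $i\ne j$. *)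

theory Defs
  imports "HOL-Combinatorics.Permutations"
begin

definition is_partition :: "nat list \<Rightarrow> nat \<Rightarrow> bool" where
  "is_partition lam k \<longleftrightarrow> (\<forall>x\<in>set lam. 0 < x) \<and> sum_list lam = k"

text \<open>Block I_{j+1} = {s_j + 1 .. s_{j+1}} (0-indexed j).\<close>
definition block :: "nat list \<Rightarrow> nat \<Rightarrow> nat set" where
  "block lam j = {sum_list (take j lam) + 1 .. sum_list (take (Suc j) lam)}"

definition S_lambda :: "nat list \<Rightarrow> (nat \<Rightarrow> nat) set" where
  "S_lambda lam = {p. p permutes {1..sum_list lam} \<and>
                      (\<forall>j<length lam. p ` block lam j = block lam j)}"

definition graph :: "'a set \<Rightarrow> ('a \<Rightarrow> 'a \<Rightarrow> bool) \<Rightarrow> bool" where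
  "graph V E \<longleftrightarrow> (\<forall>u v. E u v \<longrightarrow> u \<in> V \<and> v \<in> V) \<and> (\<forall>u v. E u v \<longrightarrow> E v u)
                  \<and> (\<forall>u. \<not> E u u)"

definition signature :: "(nat \<Rightarrow> nat) set \<Rightarrow> ('a \<Rightarrow> 'a \<Rightarrow> bool) \<Rightarrow> ('a \<Rightarrow> 'a \<Rightarrow> nat \<Rightarrow> nat) \<Rightarrow> bool" where
  "signature S E \<sigma> \<longleftrightarrow> (\<forall>u v. E u v \<longrightarrow> \<sigma> u v \<in> S \<and> \<sigma> v u = inv (\<sigma> u v))"

definition colouring :: "nat \<Rightarrow> 'a set \<Rightarrow> ('a \<Rightarrow> 'a \<Rightarrow> bool) \<Rightarrow> ('a \<Rightarrow> 'a \<Rightarrow> nat \<Rightarrow> nat) \<Rightarrow> ('a \<Rightarrow> nat) \<Rightarrow> bool" where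
  "colouring k V E \<sigma> f \<longleftrightarrow> (\<forall>v\<in>V. f v \<in> {1..k}) \<and> (\<forall>x y. E x y \<longrightarrow> \<sigma> x y (f x) \<noteq> f y)"

definition S_k_colourable :: "(nat \<Rightarrow> nat) set \<Rightarrow> nat \<Rightarrow> 'a set \<Rightarrow> ('a \<Rightarrow> 'a \<Rightarrow> bool) \<Rightarrow> bool" where
  "S_k_colourable S k V E \<longleftrightarrow> (\<forall>\<sigma>. signature S E \<sigma> \<longrightarrow> (\<exists>f. colouring k V E \<sigma> f))"

definition join_V :: "nat \<Rightarrow> (nat \<Rightarrow> 'a set) \<Rightarrow> (nat \<times> 'a) set" where
  "join_V q V = {(i, v). i < q \<and> v \<in> V i}"

definition join_E :: "nat \<Rightarrow> (nat \<Rightarrow> 'a set) \<Rightarrow> (nat \<Rightarrow> 'a \<Rightarrow> 'a \<Rightarrow> bool) \<Rightarrow> nat \<times> 'a \<Rightarrow> nat \<times> 'a \<Rightarrow> bool" where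
  "join_E q V E x y \<longleftrightarrow> (case (x, y) of ((i, u), (j, v)) \<Rightarrow>
      i < q \<and> j < q \<and> u \<in> V i \<and> v \<in> V j \<and> (i = j \<longrightarrow> E i u v))"

end

theory Submission
  imports Defs
begin

lemma take_sum_mono: "i \<le> j \<Longrightarrow> sum_list (take i xs) \<le> sum_list (take j (xs::nat list))"
proof -
  assume "i \<le> j"
  then have "take j xs = take i xs @ take (j - i) (drop i xs)"
    by (metis le_add_diff_inverse take_add)
  then show ?thesis by simp
qed

lemma take_sum_le: "sum_list (take i xs) \<le> sum_list (xs::nat list)"
  by (metis append_take_drop_id le_add1 sum_list_append)

lemma block_eq: "j < length xs \<Longrightarrow> block xs j = {sum_list (take j xs) + 1 .. sum_list (take j xs) + xs!j}"
  by (simp add: block_def take_Suc_conv_app_nth)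

lemma block_disj: "j \<noteq> j' \<Longrightarrow> block xs j \<inter> block xs j' = {}"
proof -
  have *: "block xs j \<inter> block xs j' = {}" if "j < j'" for j j'
  proof -
    have "sum_list (take (Suc j) xs) \<le> sum_list (take j' xs)" using that take_sum_mono by simp
    then show ?thesis by (auto simp: block_def)
  qed
  assume "j \<noteq> j'"
  then show ?thesis using *[of j j'] *[of j' j] by (cases "j < j'") auto
qed

lemma block_sub: "block xs j \<subseteq> {1..sum_list xs}"
  using take_sum_le[of "Suc j" xs] by (auto simp: block_def)

lemma block_Cons0: "block (x#xs) 0 = {1..x}" by (simp add: block_def)
lemma block_ConsS: "block (x#xs) (Suc j) = (\<lambda>c. c + x) ` block xs j"
  by (auto simp: block_def image_iff intro!: bexI[where x="_ - x"])

lemma block_cover: "{1..sum_list xs} = (\<Union>j<length xs. block xs j)"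
proof (induction xs)
  case Nil then show ?case by simp
next
  case (Cons x xs)
  show ?case
  proof
    show "(\<Union>j<length (x#xs). block (x#xs) j) \<subseteq> {1..sum_list (x#xs)}" using block_sub by blast
  next
    show "{1..sum_list (x#xs)} \<subseteq> (\<Union>j<length (x#xs). block (x#xs) j)"
    proof
      fix c assume c: "c \<in> {1..sum_list (x#xs)}"
      show "c \<in> (\<Union>j<length (x#xs). block (x#xs) j)"
      proof (cases "c \<le> x")
        case True then show ?thesis using c by (auto simp: block_Cons0 intro!: bexI[where x=0])
      next
        case False
        then have "c - x \<in> {1..sum_list xs}" using c by auto
        then obtain j where j: "j < length xs" "c - x \<in> block xs j" using Cons.IH by blast
        then have "c \<in> block (x#xs) (Suc j)" using False unfolding block_ConsS
          by (auto simp: image_iff intro!: bexI[where x="c-x"])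
        then show ?thesis using j by auto
      qed
    qed
  qed
qed

definition bidx :: "nat list \<Rightarrow> nat \<Rightarrow> nat" where
  "bidx xs c = (THE j. j < length xs \<and> c \<in> block xs j)"

lemma bidx_eq: "j < length xs \<Longrightarrow> c \<in> block xs j \<Longrightarrow> bidx xs c = j"
  unfolding bidx_def using block_disj by (intro the_equality) blast+

lemma matching:
  fixes q :: nat and lams :: "nat \<Rightarrow> nat list" and lam :: "nat list"
  assumes "mset lam = (\<Sum>i<q. mset (lams i))"
  shows "\<exists>m. (\<forall>i<q. \<forall>j<length (lams i). m i j < length lam \<and> lam ! m i j = lams i ! j) \<and>
     (\<forall>i<q. \<forall>j<length (lams i). \<forall>i'<q. \<forall>j'<length (lams i'). m i j = m i' j' \<longrightarrow> i = i' \<and> j = j')"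
proof -
  define L where "L = concat (map lams [0..<q])"
  define off where "off i = length (concat (map lams [0..<i]))" for i
  have "mset L = mset lam" unfolding L_def mset_concat assms
    by (simp add: sum_set_upt_conv_sum_list_nat[symmetric] atLeast0LessThan)
  then obtain p where p: "p permutes {..<length lam}" "permute_list p lam = L"
    by (metis mset_eq_permutation)
  have offS: "off (Suc i) = off i + length (lams i)" for i by (simp add: off_def)
  have offmono: "off i + length (lams i) \<le> off i'" if "i < i'" for i i'
    using that
  proof (induction i' rule: less_induct)
    case (less i')
    then obtain i'' where i'': "i' = Suc i''" by (cases i') auto
    show ?case
    proof (cases "i = i''")
      case True then show ?thesis using i'' offS by simp
    next
      case False then have "i < i''" using less i'' by simp
      then show ?thesis using less.IH[of i''] i'' offS by fastforce
    qed
  qed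
  have Lnth: "off i + j < length L \<and> L ! (off i + j) = lams i ! j" if "i < q" "j < length (lams i)" for i j
  proof -
    have "[0..<q] = [0..<i] @ [i..<q]" using upt_add_eq_append[of 0 i "q-i"] that by simp
    also have "[i..<q] = i # [Suc i..<q]" using that upt_conv_Cons by simp
    finally have "[0..<q] = [0..<i] @ i # [Suc i..<q]" .
    then have "L = concat (map lams [0..<i]) @ lams i @ concat (map lams [Suc i..<q])"
      by (simp add: L_def)
    then show ?thesis using that by (simp add: off_def nth_append)
  qed
  have lenL: "length L = length lam" using p by (metis length_permute_list)
  define m where "m i j = p (off i + j)" for i j
  have "m i j < length lam \<and> lam ! m i j = lams i ! j" if "i < q" "j < length (lams i)" for i j
    using Lnth[OF that] p lenL permute_list_nth[OF p(1), of "off i + j"] permutes_in_image[OF p(1)]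
    by (auto simp: m_def)
  moreover have "i = i' \<and> j = j'" if "i < q" "j < length (lams i)" "i' < q" "j' < length (lams i')"
     "m i j = m i' j'" for i j i' j'
  proof -
    have "off i + j = off i' + j'"
      using that(5) permutes_inj[OF p(1)] unfolding m_def by (meson injD)
    moreover have False if "i < i'" using offmono[OF that] \<open>j < length (lams i)\<close> calculation by simp
    moreover have False if "i' < i" using offmono[OF that] \<open>j' < length (lams i')\<close> calculation by simp
    ultimately show ?thesis by (metis linorder_neqE_nat add_left_cancel)
  qed
  ultimately show ?thesis by blast
qed

definition phi :: "nat list \<Rightarrow> nat list \<Rightarrow> (nat \<Rightarrow> nat) \<Rightarrow> nat \<Rightarrow> nat" where
  "phi xs lam mm c = sum_list (take (mm (bidx xs c)) lam) + (c - sum_list (take (bidx xs c) xs))"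

lemma phi_block:
  assumes "j < length xs" "mm j < length lam" "lam ! mm j = xs ! j"
  shows "phi xs lam mm ` block xs j = block lam (mm j) \<and> inj_on (phi xs lam mm) (block xs j)"
proof -
  define T where "T = sum_list (take j xs)"
  define T' where "T' = sum_list (take (mm j) lam)"
  have b1: "block xs j = {T+1..T + xs!j}" using block_eq[OF assms(1)] T_def by simp
  have b2: "block lam (mm j) = {T'+1..T' + xs!j}" using block_eq[OF assms(2)] T'_def assms(3) by simp
  have ph: "phi xs lam mm c = T' + (c - T)" if "c \<in> block xs j" for c
    using bidx_eq[OF assms(1) that] T_def T'_def by (simp add: phi_def)
  have "phi xs lam mm ` block xs j = (\<lambda>c. T' + (c - T)) ` {T+1..T + xs!j}"
    using ph b1 by (auto simp: image_iff)
  also have "\<dots> = {T'+1..T' + xs!j}"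
  proof
    show "(\<lambda>c. T' + (c - T)) ` {T+1..T + xs!j} \<subseteq> {T'+1..T' + xs!j}" by auto
    show "{T'+1..T' + xs!j} \<subseteq> (\<lambda>c. T' + (c - T)) ` {T+1..T + xs!j}"
    proof
      fix x assume x: "x \<in> {T'+1..T' + xs!j}"
      then have "x = T' + ((x - T' + T) - T)" "x - T' + T \<in> {T+1..T + xs!j}" by auto
      then show "x \<in> (\<lambda>c. T' + (c - T)) ` {T+1..T + xs!j}" by (metis rev_image_eqI)
    qed
  qed
  finally have "phi xs lam mm ` block xs j = block lam (mm j)" using b2 by simp
  moreover have "inj_on (phi xs lam mm) (block xs j)"
    by (rule inj_onI) (use ph b1 in auto)
  ultimately show ?thesis by simp
qed

definition conj :: "nat set \<Rightarrow> (nat \<Rightarrow> nat) \<Rightarrow> (nat \<Rightarrow> nat) \<Rightarrow> nat \<Rightarrow> nat" where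
  "conj A f s = (\<lambda>c. if c \<in> A then inv_into A f (s (f c)) else c)"

lemma conj_permutes:
  assumes "inj_on f A" "s permutes U" "s ` (f ` A) = f ` A"
  shows "conj A f s permutes A"
proof (rule bij_imp_permutes)
  have "bij_betw f A (f ` A)" using assms(1) by (simp add: bij_betw_imageI)
  moreover have "bij_betw s (f ` A) (f ` A)"
    using assms(2,3) permutes_inj by (metis bij_betw_def inj_on_subset subset_UNIV)
  moreover have "bij_betw (inv_into A f) (f ` A) A" using assms(1) by (simp add: bij_betw_inv_into \<open>bij_betw f A (f ` A)\<close>)
  ultimately have "bij_betw (inv_into A f \<circ> s \<circ> f) A A" by (meson bij_betw_trans)
  then show "bij_betw (conj A f s) A A"
    by (rule bij_betw_cong[THEN iffD1, rotated]) (simp add: conj_def)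
  show "\<And>x. x \<notin> A \<Longrightarrow> conj A f s x = x" by (simp add: conj_def)
qed

lemma conj_comp:
  assumes "inj_on f A" "s permutes U" "s ` (f ` A) = f ` A"
  shows "conj A f (inv s) \<circ> conj A f s = id"
proof
  fix c
  show "(conj A f (inv s) \<circ> conj A f s) c = id c"
  proof (cases "c \<in> A")
    case True
    have fc: "s (f c) \<in> f ` A" using assms(3) True by blast
    then have "inv_into A f (s (f c)) \<in> A" by (auto simp: inv_into_into)
    moreover have "f (inv_into A f (s (f c))) = s (f c)" using fc by (simp add: f_inv_into_f)
    ultimately show ?thesis using True assms(1,2)
      by (simp add: conj_def permutes_inverses(2))
  qed (simp add: conj_def)
qed

lemma conj_inv:
  assumes "inj_on f A" "s permutes U" "s ` (f ` A) = f ` A"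
  shows "inv (conj A f s) = conj A f (inv s)"
proof (rule inv_unique_comp)
  have si: "inv s permutes U" using assms(2) by (simp add: permutes_inv)
  have "inv s ` (f ` A) = inv s ` s ` (f ` A)" using assms(3) by simp
  also have "\<dots> = f ` A" using assms(2) by (simp add: image_comp permutes_inverses(2) comp_def)
  finally have i3: "inv s ` (f ` A) = f ` A" .
  show "conj A f (inv s) \<circ> conj A f s = id" by (rule conj_comp[OF assms])
  have "conj A f (inv (inv s)) \<circ> conj A f (inv s) = id" by (rule conj_comp[OF assms(1) si i3])
  moreover have "inv (inv s) = s" using assms(2) by (simp add: permutes_inv_inv)
  ultimately show "conj A f s \<circ> conj A f (inv s) = id" by simp
qed

theorem lemma16:
  fixes q :: nat and ks :: "nat \<Rightarrow> nat" and lams :: "nat \<Rightarrow> nat list"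
    and V :: "nat \<Rightarrow> 'a set" and E :: "nat \<Rightarrow> 'a \<Rightarrow> 'a \<Rightarrow> bool" and lam :: "nat list"
  assumes "\<forall>i<q. is_partition (lams i) (ks i)"
    and "\<forall>i<q. graph (V i) (E i)"
    and "\<forall>i<q. S_k_colourable (S_lambda (lams i)) (ks i) (V i) (E i)"
    and "mset lam = (\<Sum>i<q. mset (lams i))"
  shows "S_k_colourable (S_lambda lam) (\<Sum>i<q. ks i) (join_V q V) (join_E q V E)"
  unfolding S_k_colourable_def
proof (intro allI impI)
  fix \<sigma> assume sig: "signature (S_lambda lam) (join_E q V E) \<sigma>"
  define K where "K = (\<Sum>i<q. ks i)"
  obtain m where mm: "(\<forall>i<q. \<forall>j<length (lams i). m i j < length lam \<and> lam ! m i j = lams i ! j) \<and>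
     (\<forall>i<q. \<forall>j<length (lams i). \<forall>i'<q. \<forall>j'<length (lams i'). m i j = m i' j' \<longrightarrow> i = i' \<and> j = j')"
    using matching[OF assms(4)] by (rule exE)
  note m1 = conjunct1[OF mm] and m2 = conjunct2[OF mm]
  define \<phi> where "\<phi> i = phi (lams i) lam (m i)" for i
  define A where "A i = {1..ks i}" for i
  have sumi: "sum_list (lams i) = ks i" if "i < q" for i using assms(1) that by (simp add: is_partition_def)
  have Pblk: "\<phi> i ` block (lams i) j = block lam (m i j) \<and> inj_on (\<phi> i) (block (lams i) j)"
    if "i < q" "j < length (lams i)" for i j
  proof -
    have "m i j < length lam" "lam ! m i j = lams i ! j" using m1[rule_format, OF that] by simp_all
    then show ?thesis unfolding \<phi>_def using phi_block[OF that(2)] by blast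
  qed
  have Acov: "A i = (\<Union>j<length (lams i). block (lams i) j)" if "i < q" for i
    using block_cover[of "lams i"] sumi[OF that] by (simp add: A_def)
  have inj: "inj_on (\<phi> i) (A i)" if i: "i < q" for i
  proof (rule inj_onI)
    fix c c' assume c: "c \<in> A i" "c' \<in> A i" "\<phi> i c = \<phi> i c'"
    have "c \<in> (\<Union>j<length (lams i). block (lams i) j)" using c(1) Acov[OF i] by simp
    then obtain j where j: "j < length (lams i)" "c \<in> block (lams i) j" by blast
    have "c' \<in> (\<Union>j<length (lams i). block (lams i) j)" using c(2) Acov[OF i] by simp
    then obtain j' where j': "j' < length (lams i)" "c' \<in> block (lams i) j'" by blast
    show "c = c'"
    proof (cases "j = j'")
      case True
      have "inj_on (\<phi> i) (block (lams i) j)" using Pblk[OF i j(1)] by blast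
      from inj_onD[OF this c(3) j(2)] j'(2) True show ?thesis by simp
    next
      case False
      have "m i j = m i j' \<longrightarrow> i = i \<and> j = j'" using m2[rule_format, OF i j(1) i j'(1)] by blast
      then have "m i j \<noteq> m i j'" using False by blast
      moreover have "\<phi> i c \<in> block lam (m i j)"
        using imageI[OF j(2), of "\<phi> i"] conjunct1[OF Pblk[OF i j(1)]] by simp
      moreover have "\<phi> i c' \<in> block lam (m i j')"
        using imageI[OF j'(2), of "\<phi> i"] conjunct1[OF Pblk[OF i j'(1)]] by simp
      moreover have "block lam (m i j) \<inter> block lam (m i j') = {}" by (rule block_disj) fact
      ultimately show ?thesis using c(3) by auto
    qed
  qed
  have img: "\<phi> i ` A i = (\<Union>j<length (lams i). block lam (m i j))" if i: "i < q" for i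
    using Pblk[OF i] Acov[OF i] by (simp add: image_UN)
  have "sum_list lam = sum_mset (mset lam)" by (simp add: sum_mset_sum_list)
  also have "\<dots> = (\<Sum>i<q. sum_mset (mset (lams i)))" unfolding assms(4)
    by (induction q) auto
  also have "\<dots> = K" unfolding K_def using sumi by (simp add: sum_mset_sum_list)
  finally have sumlam: "sum_list lam = K" .
  have range: "\<phi> i ` A i \<subseteq> {1..K}" if i: "i < q" for i
    using img[OF i] block_sub[of lam] sumlam by blast
  have disj: "\<phi> i ` A i \<inter> \<phi> i' ` A i' = {}" if "i < q" "i' < q" "i \<noteq> i'" for i i'
  proof -
    have "block lam (m i j) \<inter> block lam (m i' j') = {}" if "j < length (lams i)" "j' < length (lams i')" for j j'
    proof (rule block_disj)
      show "m i j \<noteq> m i' j'" using m2[rule_format, OF \<open>i < q\<close> that(1) \<open>i' < q\<close> that(2)] \<open>i \<noteq> i'\<close> by blast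
    qed
    then show ?thesis unfolding img[OF that(1)] img[OF that(2)] by blast
  qed
  have pres: "s ` (\<phi> i ` A i) = \<phi> i ` A i" if "i < q" "s \<in> S_lambda lam" for i s
  proof -
    have "s ` block lam (m i j) = block lam (m i j)" if "j < length (lams i)" for j
      using m1[rule_format, OF \<open>i < q\<close> that] \<open>s \<in> S_lambda lam\<close> by (simp add: S_lambda_def)
    then show ?thesis unfolding img[OF that(1)] image_UN by simp
  qed
  have sperm: "s permutes {1..sum_list lam}" if "s \<in> S_lambda lam" for s
    using that by (simp add: S_lambda_def)
  define cj where "cj i s = conj (A i) (\<phi> i) s" for i s
  have cjS: "cj i s \<in> S_lambda (lams i)" if i: "i < q" and s: "s \<in> S_lambda lam" for i s
  proof -
    have "cj i s permutes A i" unfolding cj_def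
      by (rule conj_permutes[OF inj[OF i] sperm[OF s] pres[OF i s]])
    moreover have "cj i s ` block (lams i) j = block (lams i) j" if j: "j < length (lams i)" for j
    proof -
      have bA: "block (lams i) j \<subseteq> A i" using Acov[OF i] j by blast
      have "cj i s ` block (lams i) j = inv_into (A i) (\<phi> i) ` s ` \<phi> i ` block (lams i) j"
        using bA by (auto simp: cj_def conj_def image_iff)
      also have "\<dots> = inv_into (A i) (\<phi> i) ` \<phi> i ` block (lams i) j"
        using Pblk[OF i j] m1 i j s by (simp add: S_lambda_def)
      also have "\<dots> = block (lams i) j" using inj[OF i] bA by simp
      finally show ?thesis .
    qed
    ultimately show ?thesis using sumi[OF i] by (simp add: S_lambda_def A_def)
  qed
  have cjinv: "inv (cj i s) = cj i (inv s)" if i: "i < q" and s: "s \<in> S_lambda lam" for i s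
    unfolding cj_def by (rule conj_inv[OF inj[OF i] sperm[OF s] pres[OF i s]])
  define \<tau> where "\<tau> i u v = cj i (\<sigma> (i, u) (i, v))" for i u v
  have jE: "join_E q V E (i, u) (i, v)" if "i < q" "E i u v" for i u v
  proof -
    have "graph (V i) (E i)" using assms(2) that(1) by blast
    then have "u \<in> V i" "v \<in> V i" using that(2) unfolding graph_def by blast+
    then show ?thesis using that(1,2) by (simp add: join_E_def)
  qed
  have sigi: "signature (S_lambda (lams i)) (E i) (\<tau> i)" if i: "i < q" for i
    unfolding signature_def
  proof (intro allI impI)
    fix u v assume e: "E i u v"
    have s1: "\<sigma> (i,u) (i,v) \<in> S_lambda lam" "\<sigma> (i,v) (i,u) = inv (\<sigma> (i,u) (i,v))"
      using sig[unfolded signature_def, rule_format, OF jE[OF i e]] by auto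
    show "\<tau> i u v \<in> S_lambda (lams i) \<and> \<tau> i v u = inv (\<tau> i u v)"
      using cjS[OF i s1(1)] cjinv[OF i s1(1)] s1(2) by (simp add: \<tau>_def)
  qed
  define G where "G i = (SOME g. colouring (ks i) (V i) (E i) (\<tau> i) g)" for i
  have G: "colouring (ks i) (V i) (E i) (\<tau> i) (G i)" if i: "i < q" for i
  proof -
    have "\<exists>g. colouring (ks i) (V i) (E i) (\<tau> i) g"
    proof -
      have "S_k_colourable (S_lambda (lams i)) (ks i) (V i) (E i)" using assms(3) i by blast
      then show ?thesis using sigi[OF i] unfolding S_k_colourable_def by blast
    qed
    then show ?thesis unfolding G_def by (rule someI_ex)
  qed
  define f where "f x = \<phi> (fst x) (G (fst x) (snd x))" for x
  have fin: "f (i, v) \<in> \<phi> i ` A i" if "i < q" "v \<in> V i" for i v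
  proof -
    have "G i v \<in> {1..ks i}" using G[OF that(1)] that(2) unfolding colouring_def by blast
    then show ?thesis by (simp add: f_def A_def)
  qed
  have "colouring K (join_V q V) (join_E q V E) \<sigma> f"
    unfolding colouring_def
  proof (intro conjI allI impI ballI)
    fix x assume "x \<in> join_V q V"
    then obtain i v where x: "x = (i, v)" "i < q" "v \<in> V i" by (auto simp: join_V_def)
    show "f x \<in> {1..K}" using fin[OF x(2,3)] range[OF x(2)] x(1) by blast
  next
    fix x y assume e: "join_E q V E x y"
    obtain i u where x: "x = (i, u)" by (cases x)
    obtain j v where y: "y = (j, v)" by (cases y)
    note xy = x y
    have h: "i < q" "j < q" "u \<in> V i" "v \<in> V j" "i = j \<longrightarrow> E i u v"
      using e unfolding xy join_E_def by simp_all
    have sS: "\<sigma> x y \<in> S_lambda lam" using sig[unfolded signature_def, rule_format, OF e] by blast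
    show "\<sigma> x y (f x) \<noteq> f y"
    proof (cases "i = j")
      case False
      have "\<sigma> x y (f x) \<in> \<phi> i ` A i" using pres[OF h(1) sS] fin[OF h(1,3)] xy by blast
      moreover have "f y \<in> \<phi> j ` A j" using fin[OF h(2,4)] xy by simp
      ultimately show ?thesis using disj[OF h(1,2) False] by (metis IntI empty_iff)
    next
      case True
      then have Euv: "E i u v" using h by simp
      have gu: "G i u \<in> A i" "G i v \<in> A i"
        using G[OF h(1)] h(3) h(4) True unfolding colouring_def A_def by blast+
      have ne: "\<tau> i u v (G i u) \<noteq> G i v"
        using G[OF h(1), unfolded colouring_def] Euv by blast
      show ?thesis
      proof
        assume eq: "\<sigma> x y (f x) = f y"
        have "\<tau> i u v (G i u) = inv_into (A i) (\<phi> i) (\<sigma> x y (\<phi> i (G i u)))"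
          using gu xy True by (simp add: \<tau>_def cj_def conj_def)
        also have "\<dots> = inv_into (A i) (\<phi> i) (\<phi> i (G i v))" using eq xy True by (simp add: f_def)
        also have "\<dots> = G i v" using inj[OF h(1)] gu by simp
        finally show False using ne by simp
      qed
    qed
  qed
  then show "\<exists>f. colouring (\<Sum>i<q. ks i) (join_V q V) (join_E q V E) \<sigma> f"
    unfolding K_def by blast
qed

end
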